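(* Let $R_1,R_2$ be commutative rings with nonzero identity, $I_1$ an ideal of $R_1$, $I_2$ an ideal of $R_2$, $R=R_1\times R_2$ and $I=I_1\times I_2$. Let $x\in R_1\setminus I_1$ and $y\in R_2\setminus I_2$. Then for every $a\in I_1$ and $b\in I_2$, the vertex $(x,b)$ is adjacent to the vertex $(a,y)$ in $\Gamma''_I(R)$.
   Context: $R_1\times R_2$ has componentwise operations. For a commutative ring $S$ and an ideal $J$ of $S$, $\Gamma''_J(S)$ is the simple undirected graph whose vertex set is $\{x\in S\setminus J : xS+J\neq S\}$, with distinct vertices $x,y$ adjacent if and only if $x\notin yS+J$ and $y\notin xS+J$. *)

theory Defs
  imports "HOL-Algebra.Algebra"
begin

definition elt_plus_ideal :: "('a, 'm) ring_scheme \<Rightarrow> 'a \<Rightarrow> 'a set \<Rightarrow> 'a set" where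
  "elt_plus_ideal S x J = {x \<otimes>\<^bsub>S\<^esub> s \<oplus>\<^bsub>S\<^esub> j | s j. s \<in> carrier S \<and> j \<in> J}"

definition gamma2_verts :: "('a, 'm) ring_scheme \<Rightarrow> 'a set \<Rightarrow> 'a set" where
  "gamma2_verts S J = {x \<in> carrier S - J. elt_plus_ideal S x J \<noteq> carrier S}"

definition gamma2_adj :: "('a, 'm) ring_scheme \<Rightarrow> 'a set \<Rightarrow> 'a \<Rightarrow> 'a \<Rightarrow> bool" where
  "gamma2_adj S J x y \<longleftrightarrow> x \<in> gamma2_verts S J \<and> y \<in> gamma2_verts S J \<and> x \<noteq> y \<and>
     x \<notin> elt_plus_ideal S y J \<and> y \<notin> elt_plus_ideal S x J"

end

theory Submission
  imports Defs
begin

lemma rdp_mult: "(a, b) \<otimes>\<^bsub>RDirProd R S\<^esub> (c, d) = (a \<otimes>\<^bsub>R\<^esub> c, b \<otimes>\<^bsub>S\<^esub> d)"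
  by (simp add: RDirProd_def DirProd_def monoid.defs)

lemma rdp_add: "(a, b) \<oplus>\<^bsub>RDirProd R S\<^esub> (c, d) = (a \<oplus>\<^bsub>R\<^esub> c, b \<oplus>\<^bsub>S\<^esub> d)"
  by (simp add: RDirProd_def DirProd_def monoid.defs)

lemma epi_fst:
  assumes "ideal I1 R1" "p \<in> I1" "z \<in> elt_plus_ideal (RDirProd R1 R2) (p, q) (I1 \<times> I2)"
  shows "fst z \<in> I1"
proof -
  from assms(3) obtain s j where z: "z = (p, q) \<otimes>\<^bsub>RDirProd R1 R2\<^esub> s \<oplus>\<^bsub>RDirProd R1 R2\<^esub> j"
    and s: "s \<in> carrier (RDirProd R1 R2)" and j: "j \<in> I1 \<times> I2"
    unfolding elt_plus_ideal_def by blast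
  obtain s1 s2 where ss: "s = (s1, s2)" by force
  obtain j1 j2 where jj: "j = (j1, j2)" by force
  have s1: "s1 \<in> carrier R1" using s ss by (simp add: RDirProd_carrier)
  have j1: "j1 \<in> I1" using j jj by simp
  have "fst z = p \<otimes>\<^bsub>R1\<^esub> s1 \<oplus>\<^bsub>R1\<^esub> j1" using z ss jj by (simp add: rdp_mult rdp_add)
  moreover have "p \<otimes>\<^bsub>R1\<^esub> s1 \<in> I1" using assms(1,2) s1 by (simp add: ideal.I_r_closed)
  ultimately show ?thesis using j1 assms(1) by (simp add: additive_subgroup.a_closed ideal.axioms(1))
qed

lemma epi_snd:
  assumes "ideal I2 R2" "q \<in> I2" "z \<in> elt_plus_ideal (RDirProd R1 R2) (p, q) (I1 \<times> I2)"
  shows "snd z \<in> I2"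
proof -
  from assms(3) obtain s j where z: "z = (p, q) \<otimes>\<^bsub>RDirProd R1 R2\<^esub> s \<oplus>\<^bsub>RDirProd R1 R2\<^esub> j"
    and s: "s \<in> carrier (RDirProd R1 R2)" and j: "j \<in> I1 \<times> I2"
    unfolding elt_plus_ideal_def by blast
  obtain s1 s2 where ss: "s = (s1, s2)" by force
  obtain j1 j2 where jj: "j = (j1, j2)" by force
  have s2: "s2 \<in> carrier R2" using s ss by (simp add: RDirProd_carrier)
  have j2: "j2 \<in> I2" using j jj by simp
  have "snd z = q \<otimes>\<^bsub>R2\<^esub> s2 \<oplus>\<^bsub>R2\<^esub> j2" using z ss jj by (simp add: rdp_mult rdp_add)
  moreover have "q \<otimes>\<^bsub>R2\<^esub> s2 \<in> I2" using assms(1,2) s2 by (simp add: ideal.I_r_closed)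
  ultimately show ?thesis using j2 assms(1) by (simp add: additive_subgroup.a_closed ideal.axioms(1))
qed

theorem lemma2p6:
  fixes R1 :: "('a, 'm) ring_scheme" and R2 :: "('b, 'n) ring_scheme"
    and I1 :: "'a set" and I2 :: "'b set"
  assumes "cring R1" and "cring R2"
    and "\<one>\<^bsub>R1\<^esub> \<noteq> \<zero>\<^bsub>R1\<^esub>" and "\<one>\<^bsub>R2\<^esub> \<noteq> \<zero>\<^bsub>R2\<^esub>"
    and "ideal I1 R1" and "ideal I2 R2"
    and "x \<in> carrier R1 - I1" and "y \<in> carrier R2 - I2"
    and "a \<in> I1" and "b \<in> I2"
  shows "gamma2_adj (RDirProd R1 R2) (I1 \<times> I2) (x, b) (a, y)"
proof -
  have a: "a \<in> carrier R1" using assms(5,9) by (meson ideal.axioms(1) additive_subgroup.a_subset subsetD)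
  have b: "b \<in> carrier R2" using assms(6,10) by (meson ideal.axioms(1) additive_subgroup.a_subset subsetD)
  have n1: "(a, y) \<notin> elt_plus_ideal (RDirProd R1 R2) (x, b) (I1 \<times> I2)"
    using epi_snd[OF assms(6,10)] assms(8) by fastforce
  have n2: "(x, b) \<notin> elt_plus_ideal (RDirProd R1 R2) (a, y) (I1 \<times> I2)"
    using epi_fst[OF assms(5,9)] assms(7) by fastforce
  have c1: "(a, y) \<in> carrier (RDirProd R1 R2)" using a assms(8) by (simp add: RDirProd_carrier)
  have c2: "(x, b) \<in> carrier (RDirProd R1 R2)" using b assms(7) by (simp add: RDirProd_carrier)
  have v1: "(x, b) \<in> gamma2_verts (RDirProd R1 R2) (I1 \<times> I2)"
    unfolding gamma2_verts_def using c2 n1 c1 assms(7) by blast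
  have v2: "(a, y) \<in> gamma2_verts (RDirProd R1 R2) (I1 \<times> I2)"
    unfolding gamma2_verts_def using c2 n2 c1 assms(8) by blast
  have "(x, b) \<noteq> (a, y)" using assms(7,9) by auto
  then show ?thesis unfolding gamma2_adj_def using v1 v2 n1 n2 by blast
qed

end
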